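(* Let $A$, $\Omega$ be finite nonempty sets. The set of environments $(u_S,u_R)\in[0,1]^{2|A||\Omega|}$ satisfying scant-indifferences has Lebesgue measure one.
   Context: $A=\{a_1,\dots,a_{|A|}\}$. An environment is a pair of functions $u_S,u_R:A\times\Omega\to[0,1]$, identified with a point of $[0,1]^{2|A||\Omega|}$. For $a\in A$ let $\mathbf u_S(a)=u_S(a,\cdot)\in\mathbb R^{|\Omega|}$ and $\mathbf u_R(a)=u_R(a,\cdot)\in\mathbb R^{|\Omega|}$. For each $i$, the expanded-indifference matrix $T^i$ has $|\Omega|$ columns and rows: $\mathbf u_S(a_j)-\mathbf u_S(a_i)$ for each $j\ne i$, then $\mathbf u_R(a_j)-\mathbf u_R(a_i)$ for each $j\ne i$, then the rows of the $|\Omega|\times|\Omega|$ identity matrix. A row-submatrix of $T^i$ is a matrix obtained by deleting some rows of $T^i$. The environment satisfies scant-indifferences if for each $i$, every row-submatrix of $T^i$ has full rank. *)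

theory Defs
  imports "HOL-Analysis.Analysis"
begin

text \<open>The action set A is a finite type 'a, the state space \<Omega> a finite type 'w
  (types are nonempty).
  Rows of the expanded-indifference matrix T^i are indexed by ('a + 'a) + 'w:
  Inl (Inl j) (j \<noteq> i) is the row u_S(a_j) - u_S(a_i),
  Inl (Inr j) (j \<noteq> i) is the row u_R(a_j) - u_R(a_i),
  Inr w is the w-th row of the identity matrix.\<close>

definition T_row :: "('a \<Rightarrow> 'w::finite \<Rightarrow> real) \<Rightarrow> ('a \<Rightarrow> 'w \<Rightarrow> real) \<Rightarrow> 'a
    \<Rightarrow> ('a + 'a) + 'w \<Rightarrow> real^'w" where
  "T_row uS uR i r = (case r of
      Inl (Inl j) \<Rightarrow> (\<chi> w. uS j w - uS i w)
    | Inl (Inr j) \<Rightarrow> (\<chi> w. uR j w - uR i w)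
    | Inr v \<Rightarrow> axis v 1)"

definition T_idx :: "'a \<Rightarrow> (('a + 'a) + 'w) set" where
  "T_idx i = {Inl (Inl j) | j. j \<noteq> i} \<union> {Inl (Inr j) | j. j \<noteq> i} \<union> range Inr"

text \<open>A row-submatrix is given by a set R of kept row indices; its rank is the dimension
  of the span of its rows; full rank means rank = min(#rows, #columns).\<close>

definition scant_indifferences :: "('a::finite \<Rightarrow> 'w::finite \<Rightarrow> real) \<Rightarrow> ('a \<Rightarrow> 'w \<Rightarrow> real) \<Rightarrow> bool" where
  "scant_indifferences uS uR \<longleftrightarrow>
     (\<forall>i. \<forall>R \<subseteq> T_idx i. dim (T_row uS uR i ` R) = min (card R) CARD('w))"

text \<open>An environment is a point of [0,1]^(2|A||\<Omega>|), coordinates indexed by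
  ('a \<times> 'w) + ('a \<times> 'w): Inl (a,w) gives u_S(a,w), Inr (a,w) gives u_R(a,w).\<close>

definition env_S :: "real^(('a::finite \<times> 'w::finite) + ('a \<times> 'w)) \<Rightarrow> 'a \<Rightarrow> 'w \<Rightarrow> real" where
  "env_S x a w = x $ Inl (a, w)"

definition env_R :: "real^(('a::finite \<times> 'w::finite) + ('a \<times> 'w)) \<Rightarrow> 'a \<Rightarrow> 'w \<Rightarrow> real" where
  "env_R x a w = x $ Inr (a, w)"

end

theory Submission
  imports Defs
begin

definition blk :: "'a + 'a \<Rightarrow> 'w \<Rightarrow> ('a \<times> 'w) + ('a \<times> 'w)" where
  "blk q v = map_sum (\<lambda>j. (j,v)) (\<lambda>j. (j,v)) q"
definition bq :: "'a \<Rightarrow> 'a + 'a \<Rightarrow> 'a + 'a" where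
  "bq i q = map_sum (\<lambda>_. i) (\<lambda>_. i) q"
definition jof :: "'a + 'a \<Rightarrow> 'a" where "jof q = case_sum id id q"

lemma blk_inj[simp]: "blk q v = blk q' v' \<longleftrightarrow> q = q' \<and> v = v'"
  by (cases q; cases q'; auto simp: blk_def)
lemma jof_bq[simp]: "jof (bq i q) = i"
  by (cases q; auto simp: jof_def bq_def)

lemma diff_intro: "(\<lambda>y::real^'n. y $ k) differentiable_on S"
  unfolding differentiable_on_def
  by (intro ballI bounded_linear_imp_differentiable bounded_linear_vec_nth)

lemma differentiable_on_sum':
  assumes "finite A" "\<And>a. a \<in> A \<Longrightarrow> f a differentiable_on S"
  shows "(\<lambda>x. \<Sum>a\<in>A. f a x) differentiable_on S"
  using assms by (induction A rule: finite_induct) (auto intro!: differentiable_on_add)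

lemma L1: "(\<Sum>v\<in>C. a v *\<^sub>R axis (blk t v) (1::real)) $ blk t v' = (if v' \<in> C then a v' else 0)"
  for C :: "'w::finite set" and t :: "'a::finite + 'a"
proof -
  have "(\<Sum>v\<in>C. a v *\<^sub>R axis (blk t v) (1::real)) $ blk t v' = (\<Sum>v\<in>C. if v = v' then a v else 0)"
    unfolding Finite_Cartesian_Product.sum_component vector_scaleR_component axis_def vec_lambda_beta
    by (intro sum.cong) auto
  also have "\<dots> = (if v' \<in> C then a v' else 0)" by (simp add: sum.delta)
  finally show ?thesis .
qed

lemma L2: "(\<forall>v. k \<noteq> blk t v) \<Longrightarrow> (\<Sum>v\<in>C. a v *\<^sub>R axis (blk t v) (1::real)) $ k = 0"
  for C :: "'w::finite set" and t :: "'a::finite + 'a"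
  unfolding Finite_Cartesian_Product.sum_component vector_scaleR_component axis_def vec_lambda_beta
  by (intro sum.neutral) auto

lemma core:
  fixes i :: "'a::finite" and W :: "'w::finite set"
  assumes tQ: "t \<in> Q" and Qi: "\<forall>q\<in>Q. jof q \<noteq> i" and cardle: "card Q + card W \<le> CARD('w)"
  shows "negligible {x :: real^(('a \<times> 'w) + ('a \<times> 'w)). \<exists>c. c t \<noteq> 0 \<and>
     (\<forall>v. v \<notin> W \<longrightarrow> (\<Sum>q\<in>Q. c q * (x$blk q v - x$blk (bq i q) v)) = 0)}"
proof -
  define C where "C = UNIV - W"
  define D where "D = Q - {t}"
  have fQ: "finite Q" by simp
  have cC: "card C = CARD('w) - card W" unfolding C_def
    by (simp add: card_Diff_subset)
  have cD: "card D = card Q - 1" unfolding D_def using tQ by simp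
  have Qpos: "card Q \<ge> 1" using tQ fQ card_gt_0_iff[of Q] by fastforce
  have "card C \<ge> 1" using cC cardle Qpos by linarith
  then obtain v0 where v0: "v0 \<in> C" by fastforce
  have "card D \<le> card (C - {v0})" using cC cD v0 cardle by simp
  then obtain \<phi> where phi_inj: "inj_on \<phi> D" and phi_im: "\<phi> ` D \<subseteq> C - {v0}"
    by (meson card_le_inj finite)
  define P where "P = (\<lambda>v (y::real^(('a \<times> 'w) + ('a \<times> 'w))). y$(blk (bq i t) v) +
     (\<Sum>s\<in>D. y$(blk t (\<phi> s)) * (y$blk s v - y$blk (bq i s) v)))"
  define g where "g = (\<lambda>y. y + (\<Sum>v\<in>C. (P v y - y$(blk t v)) *\<^sub>R axis (blk t v) (1::real)))"
  define S where "S = {y::real^(('a \<times> 'w) + ('a \<times> 'w)). axis (blk t v0) 1 \<bullet> y = 0}"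
  have negS: "negligible S" unfolding S_def
    by (rule negligible_hyperplane) (simp add: axis_eq_0_iff)
  have diffg: "g differentiable_on S"
    unfolding g_def P_def
    by (intro derivative_intros differentiable_on_sum' diff_intro finite)
  have "negligible (g ` S)"
    by (rule negligible_differentiable_image_negligible[OF order_refl negS diffg])
  moreover have "{x :: real^(('a \<times> 'w) + ('a \<times> 'w)). \<exists>c. c t \<noteq> 0 \<and>
     (\<forall>v. v \<notin> W \<longrightarrow> (\<Sum>q\<in>Q. c q * (x$blk q v - x$blk (bq i q) v)) = 0)} \<subseteq> g ` S"
  proof
    fix x :: "real^(('a \<times> 'w) + ('a \<times> 'w))"
    assume "x \<in> {x. \<exists>c. c t \<noteq> 0 \<and>
     (\<forall>v. v \<notin> W \<longrightarrow> (\<Sum>q\<in>Q. c q * (x$blk q v - x$blk (bq i q) v)) = 0)}"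
    then obtain c where ct: "c t \<noteq> 0" and cond: "\<And>v. v \<notin> W \<Longrightarrow> (\<Sum>q\<in>Q. c q * (x$blk q v - x$blk (bq i q) v)) = 0"
      by blast
    define e where "e v = (\<Sum>s\<in>{s\<in>D. \<phi> s = v}. - c s / c t)" for v
    define y where "y = x + (\<Sum>v\<in>C. (e v - x$(blk t v)) *\<^sub>R axis (blk t v) (1::real))"
    have y1: "y $ blk t v = (if v \<in> C then e v else x $ blk t v)" for v
      unfolding y_def by (simp only: vector_add_component L1) simp
    have y2: "y $ k = x $ k" if "\<forall>v. k \<noteq> blk t v" for k
      unfolding y_def vector_add_component L2[OF that] by simp
    have bqt: "bq i q \<noteq> t" for q using Qi tQ jof_bq[of i q] by metis
    have ephi: "e (\<phi> s) = - c s / c t" if "s \<in> D" for s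
    proof -
      have "{s'\<in>D. \<phi> s' = \<phi> s} = {s}" using phi_inj that by (auto dest: inj_onD)
      then show ?thesis by (simp add: e_def)
    qed
    have e0: "e v0 = 0"
    proof -
      have "{s'\<in>D. \<phi> s' = v0} = {}" using phi_im by auto
      then show ?thesis unfolding e_def by (simp only: sum.empty)
    qed
    have yS: "y \<in> S" unfolding S_def using y1[of v0] v0 e0 by (simp add: inner_axis')
    have DQ: "D \<subseteq> Q" "t \<notin> D" unfolding D_def by auto
    have Pv: "P v y = x $ blk t v" if vC: "v \<in> C" for v
    proof -
      have a: "y $ blk (bq i t) v = x $ blk (bq i t) v" using y2 bqt by simp
      have b: "(\<Sum>s\<in>D. y$(blk t (\<phi> s)) * (y$blk s v - y$blk (bq i s) v))
          = (\<Sum>s\<in>D. (- c s / c t) * (x$blk s v - x$blk (bq i s) v))"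
      proof (rule sum.cong[OF refl])
        fix s assume sD: "s \<in> D"
        have "\<phi> s \<in> C" using phi_im sD by auto
        then have "y$(blk t (\<phi> s)) = - c s / c t" using y1 ephi sD by simp
        moreover have "y$blk s v = x$blk s v" using sD DQ by (intro y2) auto
        moreover have "y$blk (bq i s) v = x$blk (bq i s) v" using y2 bqt by simp
        ultimately show "y$(blk t (\<phi> s)) * (y$blk s v - y$blk (bq i s) v)
          = (- c s / c t) * (x$blk s v - x$blk (bq i s) v)" by simp
      qed
      have vW: "v \<notin> W" using vC unfolding C_def by simp
      have Qs: "Q = insert t D" using tQ unfolding D_def by auto
      have "0 = (\<Sum>q\<in>Q. c q * (x$blk q v - x$blk (bq i q) v))" using cond[OF vW] by simp
      also have "\<dots> = c t * (x$blk t v - x$blk (bq i t) v) + (\<Sum>q\<in>D. c q * (x$blk q v - x$blk (bq i q) v))"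
        unfolding Qs using DQ by (simp add: sum.insert)
      finally have eq: "(\<Sum>q\<in>D. c q * (x$blk q v - x$blk (bq i q) v)) = - (c t * (x$blk t v - x$blk (bq i t) v))"
        by linarith
      have "(\<Sum>s\<in>D. (- c s / c t) * (x$blk s v - x$blk (bq i s) v))
          = - (\<Sum>q\<in>D. c q * (x$blk q v - x$blk (bq i q) v)) / c t"
        by (simp add: sum_divide_distrib sum_negf)
      also have "\<dots> = x$blk t v - x$blk (bq i t) v" using eq ct by simp
      finally show ?thesis unfolding P_def using a b by simp
    qed
    have "g y = x"
    proof (subst vec_eq_iff, intro allI)
      fix k
      show "g y $ k = x $ k"
      proof (cases "\<exists>v. k = blk t v")
        case True
        then obtain v where k: "k = blk t v" by blast
        show ?thesis
        proof (cases "v \<in> C")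
          case True
          then show ?thesis unfolding g_def k vector_add_component L1 using Pv[OF True] by simp
        next
          case False
          then show ?thesis unfolding g_def k vector_add_component L1 using y1[of v] by simp
        qed
      next
        case False
        then show ?thesis unfolding g_def vector_add_component L2[OF False[simplified]] using y2[of k] False by simp
      qed
    qed
    then show "x \<in> g ` S" using yS by blast
  qed
  ultimately show ?thesis by (rule negligible_subset)
qed
lemma T_row_Inl: "T_row (env_S x) (env_R x) i (Inl q) $ v = x$blk q v - x$blk (bq i q) v"
  by (cases q) (simp_all add: T_row_def env_S_def env_R_def blk_def bq_def)

lemma T_row_Inr: "T_row uS uR i (Inr w) = axis w 1"
  by (simp add: T_row_def)

lemma reduce:
  fixes x :: "real^(('a::finite \<times> 'w::finite)+('a \<times> 'w))"
  assumes "\<not> scant_indifferences (env_S x) (env_R x)"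
  shows "\<exists>i Q W t. t\<in>Q \<and> (\<forall>q\<in>Q. jof q \<noteq> i) \<and> card Q + card W \<le> CARD('w) \<and>
     (\<exists>c. c t \<noteq> 0 \<and> (\<forall>v. v \<notin> W \<longrightarrow> (\<Sum>q\<in>Q. c q * (x$blk q v - x$blk (bq i q) v)) = 0))"
proof -
  obtain i R where R: "R \<subseteq> T_idx i" and ne: "dim (T_row (env_S x) (env_R x) i ` R) \<noteq> min (card R) CARD('w)"
    using assms unfolding scant_indifferences_def by blast
  define f where "f = T_row (env_S x) (env_R x) i"
  have fR: "finite R" by simp
  have "dim (f`R) \<le> card (f`R)" by (rule dim_le_card) (auto intro: span_base)
  also have "\<dots> \<le> card R" by (rule card_image_le[OF fR])
  finally have d1: "dim (f`R) \<le> card R" .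
  have d2: "dim (f`R) \<le> CARD('w)" by (rule dim_subset_UNIV_cart)
  have dlt: "dim (f`R) < min (card R) CARD('w)" using d1 d2 ne unfolding f_def by linarith
  obtain R' where R'R: "R' \<subseteq> R" and cR': "card R' = min (card R) CARD('w)"
    by (rule obtain_subset_with_card_n[of "min (card R) CARD('w)" R]) auto
  have "dim (f`R') \<le> dim (f`R)" by (rule dim_subset) (use R'R in auto)
  then have dlt': "dim (f`R') < card R'" using dlt cR' by linarith
  have fR': "finite R'" by simp
  obtain c where cnz: "\<exists>r\<in>R'. c r \<noteq> 0" and csum: "(\<Sum>r\<in>R'. c r *\<^sub>R f r) = 0"
  proof (cases "inj_on f R'")
    case True
    then have "card (f`R') = card R'" by (rule card_image)
    then have "\<not> independent (f`R')" using dlt' dim_eq_card_independent by fastforce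
    then obtain u where u1: "\<exists>v\<in>f`R'. u v \<noteq> 0" and u2: "(\<Sum>v\<in>f`R'. u v *\<^sub>R v) = 0"
      using dependent_finite[of "f`R'"] by auto
    have "(\<Sum>r\<in>R'. u (f r) *\<^sub>R f r) = 0" using u2 sum.reindex[OF True, of "\<lambda>v. u v *\<^sub>R v"] by simp
    moreover have "\<exists>r\<in>R'. u (f r) \<noteq> 0" using u1 by auto
    ultimately show ?thesis using that[of "u \<circ> f"] by auto
  next
    case False
    then obtain r1 r2 where r: "r1 \<in> R'" "r2 \<in> R'" "r1 \<noteq> r2" "f r1 = f r2"
      unfolding inj_on_def by blast
    define c where "c r = (if r = r1 then 1 else if r = r2 then -1 else (0::real))" for r
    have "(\<Sum>r\<in>R'. c r *\<^sub>R f r) = (\<Sum>r\<in>R'. (if r = r1 then f r else 0) - (if r = r2 then f r else 0))"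
      by (rule sum.cong) (auto simp: c_def r(3))
    also have "\<dots> = f r1 - f r2" by (simp add: sum_subtractf sum.delta r)
    also have "\<dots> = 0" using r by simp
    finally have "(\<Sum>r\<in>R'. c r *\<^sub>R f r) = 0" .
    moreover have "c r1 \<noteq> 0" by (simp add: c_def)
    ultimately show ?thesis using that[of c] r(1) by blast
  qed
  define Q where "Q = {q. Inl q \<in> R'}"
  define W where "W = {w. Inr w \<in> R'}"
  have R'eq: "R' = Inl ` Q \<union> Inr ` W" unfolding Q_def W_def
    by (auto simp: image_iff) (metis sum.exhaust)
  have disj: "Inl ` Q \<inter> Inr ` W = {}" by auto
  have "card R' = card Q + card W" unfolding R'eq
    by (simp add: card_Un_disjoint[OF _ _ disj] card_image)
  then have cQW: "card Q + card W \<le> CARD('w)" using cR' by simp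
  have Qi: "\<forall>q\<in>Q. jof q \<noteq> i"
  proof
    fix q assume "q \<in> Q"
    then have "Inl q \<in> R'" unfolding Q_def by simp
    then have "Inl q \<in> (T_idx i :: (('a+'a)+'w) set)" using R R'R by (meson subsetD)
    then show "jof q \<noteq> i" unfolding T_idx_def by (auto simp: jof_def)
  qed
  have split: "(\<Sum>r\<in>R'. c r *\<^sub>R f r) = (\<Sum>q\<in>Q. c (Inl q) *\<^sub>R f (Inl q)) + (\<Sum>w\<in>W. c (Inr w) *\<^sub>R axis w 1)"
    unfolding R'eq by (simp add: sum.union_disjoint[OF _ _ disj] sum.reindex f_def T_row_Inr)
  have comp: "(\<Sum>q\<in>Q. c (Inl q) * (x$blk q v - x$blk (bq i q) v)) = 0" if "v \<notin> W" for v
  proof -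
    have "0 = (\<Sum>r\<in>R'. c r *\<^sub>R f r) $ v" using csum by simp
    also have "\<dots> = (\<Sum>q\<in>Q. c (Inl q) * (x$blk q v - x$blk (bq i q) v)) + (\<Sum>w\<in>W. c (Inr w) * (axis w 1 $ v))"
      unfolding split by (simp add: f_def T_row_Inl)
    also have "(\<Sum>w\<in>W. c (Inr w) * (axis w 1 $ v)) = 0"
      using that by (intro sum.neutral) (auto simp: axis_def)
    finally show ?thesis by simp
  qed
  have "\<exists>t\<in>Q. c (Inl t) \<noteq> 0"
  proof (rule ccontr)
    assume nt: "\<not> ?thesis"
    then have "(\<Sum>q\<in>Q. c (Inl q) *\<^sub>R f (Inl q)) = 0" by simp
    then have z: "(\<Sum>w\<in>W. c (Inr w) *\<^sub>R axis w (1::real)) = 0" using csum split by simp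
    have "c (Inr w0) = 0" if "w0 \<in> W" for w0
    proof -
      have "0 = (\<Sum>w\<in>W. c (Inr w) *\<^sub>R axis w (1::real)) $ w0" using z by simp
      also have "\<dots> = (\<Sum>w\<in>W. if w = w0 then c (Inr w) else 0)"
        unfolding Finite_Cartesian_Product.sum_component vector_scaleR_component axis_def vec_lambda_beta
        by (intro sum.cong) auto
      also have "\<dots> = c (Inr w0)" using that by (simp add: sum.delta')
      finally show ?thesis by simp
    qed
    then show False using cnz nt unfolding R'eq by auto
  qed
  then obtain t where "t \<in> Q" "c (Inl t) \<noteq> 0" by blast
  then show ?thesis using Qi cQW comp by (intro exI[of _ i] exI[of _ Q] exI[of _ W] exI[of _ t] conjI exI[of _ "c \<circ> Inl"]) auto
qed

theorem lemma2:
  fixes dummy :: "'a::finite \<times> 'w::finite"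
  defines "E \<equiv> {x :: real^(('a \<times> 'w) + ('a \<times> 'w)).
                   x \<in> cbox 0 1 \<and> scant_indifferences (env_S x) (env_R x)}"
  shows "E \<in> sets lebesgue \<and> emeasure lebesgue E = 1"
proof -
  define Par where "Par = {(i::'a, Q::('a+'a) set, W::'w set, t). t\<in>Q \<and> (\<forall>q\<in>Q. jof q \<noteq> i) \<and> card Q + card W \<le> CARD('w)}"
  define Bad where "Bad = (\<lambda>(i::'a, Q::('a+'a) set, W::'w set, t). {x :: real^(('a \<times> 'w) + ('a \<times> 'w)). \<exists>c. c t \<noteq> 0 \<and>
     (\<forall>v. v \<notin> W \<longrightarrow> (\<Sum>q\<in>Q. c q * (x$blk q v - x$blk (bq i q) v)) = 0)})"
  have negN: "negligible (\<Union>(Bad ` Par))"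
  proof (rule negligible_Union)
    show "finite (Bad ` Par)" by simp
    fix T assume "T \<in> Bad ` Par"
    then obtain i Q W t where p: "(i,Q,W,t) \<in> Par" and T: "T = Bad (i,Q,W,t)" by auto
    show "negligible T" unfolding T Bad_def using p unfolding Par_def
      by (simp add: core)
  qed
  define Z where "Z = {x :: real^(('a \<times> 'w) + ('a \<times> 'w)). \<not> scant_indifferences (env_S x) (env_R x)}"
  have "Z \<subseteq> \<Union>(Bad ` Par)"
  proof
    fix x assume "x \<in> Z"
    then have "\<not> scant_indifferences (env_S x) (env_R x)" unfolding Z_def by simp
    from reduce[OF this] obtain i Q W t c where
      h: "t\<in>Q" "\<forall>q\<in>Q. jof q \<noteq> i" "card Q + card W \<le> CARD('w)" "c t \<noteq> 0"
         "\<forall>v. v \<notin> W \<longrightarrow> (\<Sum>q\<in>Q. c q * (x$blk q v - x$blk (bq i q) v)) = 0"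
      by blast
    then have "(i,Q,W,t) \<in> Par" "x \<in> Bad (i,Q,W,t)" unfolding Par_def Bad_def by auto
    then show "x \<in> \<Union>(Bad ` Par)" by blast
  qed
  then have "negligible Z" using negN negligible_subset by blast
  then have Znull: "Z \<in> null_sets lebesgue" by (simp add: negligible_iff_null_sets)
  have Eeq: "E = cbox 0 1 - Z" unfolding E_def Z_def by auto
  have cb: "cbox (0::real^(('a \<times> 'w) + ('a \<times> 'w))) 1 \<in> sets lebesgue"
    using lmeasurable_cbox fmeasurableD by blast
  have "E \<in> sets lebesgue" unfolding Eeq using cb Znull by auto
  moreover have "emeasure lebesgue E = emeasure lebesgue (cbox (0::real^(('a \<times> 'w) + ('a \<times> 'w))) 1)"
    unfolding Eeq by (rule emeasure_Diff_null_set[OF Znull cb])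
  moreover have "emeasure lebesgue (cbox (0::real^(('a \<times> 'w) + ('a \<times> 'w))) 1) = 1"
  proof -
    have b1: "\<forall>b\<in>(Basis :: (real^(('a \<times> 'w) + ('a \<times> 'w))) set). 1 \<bullet> b = 1"
      by (auto simp: Basis_vec_def inner_axis)
    then have "(\<Prod>b\<in>(Basis :: (real^(('a \<times> 'w) + ('a \<times> 'w))) set). 1 \<bullet> b) = 1"
      by (simp add: prod.neutral)
    then show ?thesis using b1 by (simp add: emeasure_lborel_cbox_eq)
  qed
  ultimately show ?thesis by simp
qed

end
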